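(* Let $0<p<\infty$ be such that $p$ is not an even integer, and let $k=\lceil p/2\rceil$. Then $\sum_{j=0}^{k-1}\binom{2k}{j}(-1)^j(k-j)^p\neq 0.$ *)

theory Defs
  imports Complex_Main
begin

end

theory Submission
  imports Defs
begin

lemma fd_zero:
  "\<And>x r. r < N \<Longrightarrow> (\<Sum>j\<le>N. of_nat (N choose j) * (-1::real)^j * (x - real j)^r) = 0"
proof (induction N)
  case 0 then show ?case by simp
next
  case (Suc N)
  define f where "f j = (x - real j)^r" for j
  have split: "(\<Sum>j\<le>Suc N. of_nat (Suc N choose j) * (-1::real)^j * f j)
     = (\<Sum>j\<le>N. of_nat (N choose j) * (-1::real)^j * (f j - f (Suc j)))"
  proof -
    have "(\<Sum>j\<le>Suc N. of_nat (Suc N choose j) * (-1::real)^j * f j)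
       = f 0 + (\<Sum>j\<le>N. of_nat (Suc N choose Suc j) * (-1::real)^(Suc j) * f (Suc j))"
      by (subst sum.atMost_Suc_shift) simp
    also have "\<dots> = f 0 + (\<Sum>j\<le>N. of_nat (N choose Suc j) * (-1::real)^(Suc j) * f (Suc j))
         + (\<Sum>j\<le>N. of_nat (N choose j) * (-1::real)^(Suc j) * f (Suc j))"
      by (simp only: add.assoc sum.distrib[symmetric]) (simp add: algebra_simps)
    also have "f 0 + (\<Sum>j\<le>N. of_nat (N choose Suc j) * (-1::real)^(Suc j) * f (Suc j))
        = (\<Sum>j\<le>Suc N. of_nat (N choose j) * (-1::real)^j * f j)"
      by (subst sum.atMost_Suc_shift) simp
    also have "\<dots> = (\<Sum>j\<le>N. of_nat (N choose j) * (-1::real)^j * f j)"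
      by simp
    finally show ?thesis
      by (simp add: sum_subtractf[symmetric] sum.distrib[symmetric] algebra_simps)
  qed
  have diff: "f j - f (Suc j) = - (\<Sum>i<r. of_nat (r choose i) * (-1)^(r-i) * (x - real j)^i)" for j
  proof -
    have "f (Suc j) = ((x - real j) + (-1))^r" by (simp add: f_def algebra_simps)
    also have "\<dots> = (\<Sum>i\<le>r. of_nat (r choose i) * (x - real j)^i * (-1)^(r-i))"
      by (rule binomial_ring)
    also have "\<dots> = (\<Sum>i<r. of_nat (r choose i) * (-1)^(r-i) * (x - real j)^i) + f j"
      by (simp add: lessThan_Suc_atMost[symmetric] f_def algebra_simps)
    finally show ?thesis by simp
  qed
  have "(\<Sum>j\<le>N. of_nat (N choose j) * (-1::real)^j * (f j - f (Suc j)))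
     = - (\<Sum>j\<le>N. \<Sum>i<r. of_nat (N choose j) * (-1::real)^j * (of_nat (r choose i) * (-1)^(r-i) * (x - real j)^i))"
    unfolding diff by (simp add: sum_distrib_left sum_negf)
  also have "\<dots> = - (\<Sum>i<r. \<Sum>j\<le>N. of_nat (N choose j) * (-1::real)^j * (of_nat (r choose i) * (-1)^(r-i) * (x - real j)^i))"
    by (subst sum.swap) simp
  also have "\<dots> = - (\<Sum>i<r. of_nat (r choose i) * (-1)^(r-i) *
            (\<Sum>j\<le>N. of_nat (N choose j) * (-1::real)^j * (x - real j)^i))"
    by (simp add: sum_distrib_left mult.assoc mult.left_commute)
  also have "\<dots> = 0"
  proof -
    have "\<forall>i\<in>{..<r}. (\<Sum>j\<le>N. of_nat (N choose j) * (-1::real)^j * (x - real j)^i) = 0"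
      using Suc.prems by (auto intro!: Suc.IH)
    then show ?thesis by simp
  qed
  finally show ?case using split by (simp add: f_def)
qed

lemma half_sum_zero:
  assumes "1 \<le> m" "m < k"
  shows "(\<Sum>j=0..k-1. real ((2*k) choose j) * (-1)^j * (real (k-j))^(2*m)) = 0"
proof -
  define g where "g j = real ((2*k) choose j) * (-1::real)^j * (real k - real j)^(2*m)" for j
  have full: "(\<Sum>j\<le>2*k. g j) = 0"
    unfolding g_def using assms by (intro fd_zero) simp
  have k1: "k \<ge> 1" using assms by simp
  have sets: "{..2*k} = {0..k-1} \<union> ({k} \<union> {k+1..2*k})" using k1 by auto
  have "(\<Sum>j\<le>2*k. g j) = (\<Sum>j=0..k-1. g j) + (g k + (\<Sum>j=k+1..2*k. g j))"
    unfolding sets using k1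
    by (subst sum.union_disjoint; auto)+
  also have "g k = 0" unfolding g_def using assms by simp
  also have "(\<Sum>j=k+1..2*k. g j) = (\<Sum>j=0..k-1. g j)"
  proof (rule sum.reindex_bij_witness[of _ "\<lambda>j. 2*k - j" "\<lambda>j. 2*k - j"])
    fix j assume j: "j \<in> {k+1..2*k}"
    have "(2*k) choose (2*k - j) = (2*k) choose j" using j by (intro binomial_symmetric[symmetric]) auto
    moreover have "(-1::real)^(2*k-j) = (-1)^j"
      using j by (auto simp: minus_one_power_iff)
    moreover have "(real k - real (2*k-j))^(2*m) = (real k - real j)^(2*m)"
    proof -
      have eq: "real k - real (2*k-j) = - (real k - real j)" using j by (simp add: of_nat_diff)
      show ?thesis unfolding eq by (simp add: power_mult power2_commute)
    qed
    ultimately show "g (2*k - j) = g j" unfolding g_def by simp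
  qed (use k1 in auto)
  finally have "2 * (\<Sum>j=0..k-1. g j) = 0" using full by simp
  then have "(\<Sum>j=0..k-1. g j) = 0" by simp
  moreover have "(\<Sum>j=0..k-1. g j) = (\<Sum>j=0..k-1. real ((2*k) choose j) * (-1)^j * (real (k-j))^(2*m))"
    using k1 by (intro sum.cong) (auto simp: g_def of_nat_diff)
  ultimately show ?thesis by simp
qed


lemma rolle_count:
  fixes g g' :: "real \<Rightarrow> real"
  assumes der: "\<And>x. (g has_real_derivative g' x) (at x)"
  shows "finite Z \<Longrightarrow> card Z = Suc n \<Longrightarrow> (\<forall>z\<in>Z. g z = 0) \<Longrightarrow>
    \<exists>W. finite W \<and> card W = n \<and> (\<forall>w\<in>W. g' w = 0 \<and> w < Max Z)"
proof (induction n arbitrary: Z)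
  case 0 then show ?case by (intro exI[of _ "{}"]) simp
next
  case (Suc n)
  define M where "M = Max Z"
  define Z' where "Z' = Z - {M}"
  have ZnE: "Z \<noteq> {}" using Suc.prems by auto
  have MZ: "M \<in> Z" unfolding M_def using Suc.prems ZnE by simp
  have cZ': "card Z' = Suc n" unfolding Z'_def using Suc.prems MZ by simp
  have fZ': "finite Z'" unfolding Z'_def using Suc.prems by simp
  have Z'nE: "Z' \<noteq> {}" using cZ' by auto
  obtain W' where W': "finite W'" "card W' = n" "\<forall>w\<in>W'. g' w = 0 \<and> w < Max Z'"
    using Suc.IH[OF fZ' cZ'] Suc.prems(3) unfolding Z'_def by auto
  define M' where "M' = Max Z'"
  have M'Z': "M' \<in> Z'" unfolding M'_def using fZ' Z'nE by simp
  have "M' \<le> M" using M'Z' Suc.prems(1) unfolding Z'_def M_def by simp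
  moreover have "M' \<noteq> M" using M'Z' unfolding Z'_def by auto
  ultimately have lt: "M' < M" by simp
  have gM: "g M' = g M" using Suc.prems(3) MZ M'Z' unfolding Z'_def by auto
  have cont: "continuous_on {M'..M} g"
    using der by (meson DERIV_isCont continuous_at_imp_continuous_on)
  have dif: "\<And>x. g differentiable (at x)"
    using der real_differentiable_def by blast
  obtain w where w: "M' < w" "w < M" "DERIV g w :> 0"
    using Rolle[OF lt gM cont dif] by blast
  have g'w: "g' w = 0" using DERIV_unique[OF der w(3)] .
  have wW': "w \<notin> W'" using W'(3) w(1) unfolding M'_def by force
  show ?case
  proof (intro exI[of _ "insert w W'"] conjI)
    show "finite (insert w W')" using W' by simp
    show "card (insert w W') = Suc n" using W' wW' by simp
    show "\<forall>x\<in>insert w W'. g' x = 0 \<and> x < Max Z"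
      using W'(3) g'w w lt unfolding M_def[symmetric] M'_def[symmetric] by force
  qed
qed

lemma expsum_zeros:
  fixes lam c :: "'i \<Rightarrow> real"
  shows "finite I \<Longrightarrow> card I = n \<Longrightarrow> I \<noteq> {} \<Longrightarrow> inj_on lam I \<Longrightarrow> (\<forall>i\<in>I. c i \<noteq> 0) \<Longrightarrow>
    finite Z \<Longrightarrow> (\<forall>z\<in>Z. (\<Sum>i\<in>I. c i * exp (lam i * z)) = 0) \<Longrightarrow> card Z < card I"
proof (induction n arbitrary: I c Z)
  case 0 then show ?case by simp
next
  case (Suc n)
  obtain b where b: "b \<in> I" using Suc.prems by auto
  show ?case
  proof (cases "Z = {}")
    case True then show ?thesis using Suc.prems by (simp add: card_gt_0_iff)
  next
    case False
    define g where "g x = (\<Sum>i\<in>I. c i * exp ((lam i - lam b) * x))" for x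
    define g' where "g' x = (\<Sum>i\<in>I. c i * ((lam i - lam b) * exp ((lam i - lam b) * x)))" for x
    have der: "\<And>x. (g has_real_derivative g' x) (at x)"
      unfolding g_def g'_def by (auto intro!: derivative_eq_intros sum.cong simp: mult_ac)
    have gexp: "g x = exp (- lam b * x) * (\<Sum>i\<in>I. c i * exp (lam i * x))" for x
      unfolding g_def sum_distrib_left
      by (intro sum.cong) (simp_all add: algebra_simps flip: exp_add)
    have gz: "\<forall>z\<in>Z. g z = 0" using Suc.prems(7) gexp by simp
    obtain m where m: "card Z = Suc m" using False Suc.prems(6) by (metis card_0_eq not0_implies_Suc)
    obtain W where W: "finite W" "card W = m" "\<forall>w\<in>W. g' w = 0"
      using rolle_count[OF der Suc.prems(6) m gz] by blast
    show ?thesis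
    proof (cases "I - {b} = {}")
      case True
      then have "I = {b}" using b by auto
      then have "g z = c b" for z unfolding g_def by simp
      then show ?thesis using gz False b Suc.prems(5) by auto
    next
      case False
      have hz: "(\<Sum>i\<in>I - {b}. c i * (lam i - lam b) * exp (lam i * w)) = 0" if "w \<in> W" for w
      proof -
        have "(\<Sum>i\<in>I - {b}. c i * (lam i - lam b) * exp (lam i * w))
            = (\<Sum>i\<in>I. c i * (lam i - lam b) * exp (lam i * w))"
          using b Suc.prems(1) by (simp add: sum.remove)
        also have "\<dots> = exp (lam b * w) * g' w"
          unfolding g'_def sum_distrib_left
          by (intro sum.cong) (simp_all add: algebra_simps flip: exp_add)
        also have "\<dots> = 0" using W(3) that by simp
        finally show ?thesis .
      qed
      have "card W < card (I - {b})"
      proof (rule Suc.IH[where c="\<lambda>i. c i * (lam i - lam b)"])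
        show "finite (I - {b})" using Suc.prems by simp
        show "card (I - {b}) = n" using Suc.prems b by simp
        show "I - {b} \<noteq> {}" by fact
        show "inj_on lam (I - {b})" using Suc.prems(4) by (rule inj_on_subset) auto
        show "\<forall>i\<in>I - {b}. c i * (lam i - lam b) \<noteq> 0"
          using Suc.prems(4,5) b by (auto dest: inj_onD)
        show "finite W" by fact
        show "\<forall>z\<in>W. (\<Sum>i\<in>I - {b}. c i * (lam i - lam b) * exp (lam i * z)) = 0"
          using hz by blast
      qed
      then show ?thesis using W(2) m Suc.prems b by simp
    qed
  qed
qed


theorem corollary3p8:
  fixes p :: real and k :: nat
  assumes "0 < p"
    and "\<not> (\<exists>m::nat. even m \<and> p = real m)"
    and "k = nat \<lceil>p / 2\<rceil>"
  shows "(\<Sum>j=0..k-1. real ((2*k) choose j) * (-1) ^ j * (real (k - j)) powr p) \<noteq> 0"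
proof
  assume S0: "(\<Sum>j=0..k-1. real ((2*k) choose j) * (-1) ^ j * (real (k - j)) powr p) = 0"
  have cpos: "\<lceil>p / 2\<rceil> \<ge> 1" using assms(1) by simp
  have kr: "real k = of_int \<lceil>p / 2\<rceil>" using assms(3) cpos by simp
  have "real k \<ge> 1" using kr cpos by simp
  then have k1: "k \<ge> 1" by simp
  have lo: "real k - 1 < p / 2" using kr ceiling_correct[of "p/2"] by linarith
  have hi: "p / 2 \<le> real k" using kr ceiling_correct[of "p/2"] by linarith
  have "p \<noteq> real (2*k)"
  proof
    assume "p = real (2*k)"
    moreover have "even (2*k)" by simp
    ultimately show False using assms(2) by blast
  qed
  then have hi': "p < 2 * real k" using hi by simp
  define I where "I = {0..k-1}"
  define lam where "lam j = ln (real (k - j))" for j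
  define c where "c j = real ((2*k) choose j) * (-1::real) ^ j" for j
  define Z where "Z = insert p ((\<lambda>m. 2 * real m) ` {1..k-1})"
  have pos: "real (k - j) > 0" if "j \<in> I" for j using that k1 unfolding I_def by auto
  have eqsum: "(\<Sum>i\<in>I. c i * exp (lam i * z)) = (\<Sum>j=0..k-1. real ((2*k) choose j) * (-1) ^ j * (real (k - j)) powr z)" for z
    unfolding I_def
  proof (intro sum.cong refl)
    fix j assume "j \<in> {0..k-1}"
    then have "real (k - j) > 0" using pos unfolding I_def by blast
    then show "c j * exp (lam j * z) = real ((2*k) choose j) * (-1) ^ j * (real (k - j)) powr z"
      unfolding c_def lam_def powr_def by (simp add: mult.commute)
  qed
  have "card Z < card I"
  proof (rule expsum_zeros[OF _ refl])
    show "finite I" "I \<noteq> {}" unfolding I_def by auto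
    show "inj_on lam I"
    proof (rule inj_onI)
      fix x y assume xy: "x \<in> I" "y \<in> I" "lam x = lam y"
      then have "real (k - x) = real (k - y)" using pos unfolding lam_def by simp
      then show "x = y" using xy(1,2) k1 unfolding I_def by auto
    qed
    show "\<forall>i\<in>I. c i \<noteq> 0" unfolding I_def c_def using k1 by auto
    show "finite Z" unfolding Z_def by simp
    show "\<forall>z\<in>Z. (\<Sum>i\<in>I. c i * exp (lam i * z)) = 0"
    proof
      fix z assume "z \<in> Z"
      then consider "z = p" | m where "m \<in> {1..k-1}" "z = 2 * real m" unfolding Z_def by auto
      then show "(\<Sum>i\<in>I. c i * exp (lam i * z)) = 0"
      proof cases
        case 1 then show ?thesis using S0 eqsum by simp
      next
        case (2 m)
        have "(\<Sum>j=0..k-1. real ((2*k) choose j) * (-1) ^ j * (real (k - j)) powr z)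
            = (\<Sum>j=0..k-1. real ((2*k) choose j) * (-1) ^ j * (real (k - j)) ^ (2*m))"
        proof (intro sum.cong refl)
          fix j assume "j \<in> {0..k-1}"
          then have "real (k - j) > 0" using pos unfolding I_def by blast
          then have "real (k - j) powr z = real (k - j) ^ (2*m)"
            using 2(2) powr_realpow[of "real (k-j)" "2*m"] by simp
          then show "real ((2*k) choose j) * (-1) ^ j * (real (k - j)) powr z
              = real ((2*k) choose j) * (-1) ^ j * (real (k - j)) ^ (2*m)" by simp
        qed
        also have "\<dots> = 0" using 2(1) k1 by (intro half_sum_zero) auto
        finally show ?thesis using eqsum by simp
      qed
    qed
  qed
  moreover have "card Z = k"
  proof -
    have "p \<notin> (\<lambda>m. 2 * real m) ` {1..k-1}"
    proof
      assume "p \<in> (\<lambda>m. 2 * real m) ` {1..k-1}"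
      then obtain m where "m \<in> {1..k-1}" "p = 2 * real m" by auto
      then show False using lo k1 by (simp add: of_nat_diff)
    qed
    moreover have "inj_on (\<lambda>m. 2 * real m) {1..k-1}" by (auto intro: inj_onI)
    ultimately show ?thesis unfolding Z_def using k1 by (simp add: card_image)
  qed
  moreover have "card I = k" unfolding I_def using k1 by simp
  ultimately show False by simp
qed

end
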